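(* Let $K$ and $K'$ be two non-degenerate CMIs, with $\mathrm{can}(\mathrm{pur}(K))=(C,\langle\mathbb I_K,\mathbb I_K,P_i,1\le i\le t\rangle)$ and $\mathrm{can}(\mathrm{pur}(K'))=(C',\langle\mathbb I_{K'},\mathbb I_{K'},P'_j,1\le j\le s\rangle)$. If $K$ implies $K'$, then $C\subseteq C'$.
   Context: Setting: $X_1,\dots,X_n$ jointly distributed discrete random variables with $H(X_i)<\infty$; distribution unspecified. $X_\alpha=(X_i,i\in\alpha)$, $X_\emptyset$ constant. A CMI is $K=(C,\langle Q_1,\dots,Q_k\rangle)$, $k\ge0$, $C\subseteq\{1,\dots,n\}$, $\langle\cdot\rangle$ an unordered multiset of subsets; valid (for a given distribution) if $\sum_iH(X_{Q_i}|X_C)-H(X_{Q_1},\dots,X_{Q_k}|X_C)=0$. Empty members may be deleted. Degenerate = valid for every distribution, written $(\cdot,\langle\ \rangle)$. "$K$ implies $K'$": for every joint distribution, if $K$ is valid then $K'$ is valid. $\mathrm{pur}(K)=(C,\langle Q_i\setminus C:Q_i\setminus C\ne\emptyset\rangle)$. For pure $K$: $\mathbb I_K$ = indices lying in at least two members of the collection if $k\ge2$, else $\emptyset$; $P_1,\dots,P_t$ the nonempty sets among $Q_i\setminus\mathbb I_K$; $\mathrm{can}(K)=(\cdot,\langle\ \rangle)$ if $k\le1$, $(C,\langle\mathbb I_K,\mathbb I_K\rangle)$ if $k\ge2,\mathbb I_K\ne\emptyset,t\le1$, $(C,\langle P_1..P_t\rangle)$ if $k\ge2,\mathbb I_K=\emptyset$,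 $(C,\langle\mathbb I_K,\mathbb I_K,P_1..P_t\rangle)$ if $k\ge2,\mathbb I_K\ne\emptyset,t\ge2$. General-form notation $(C,\langle\mathbb I_K,\mathbb I_K,P_i,1\le i\le t\rangle)$: copies of $\mathbb I_K$ omitted when empty, and $t=0$ for the case $(C,\langle\mathbb I_K,\mathbb I_K\rangle)$. *)

theory Defs
  imports "HOL-Probability.Probability" "HOL-Library.Multiset"
begin

text \<open>A joint distribution of X_1..X_n: a pmf on outcomes (nat => nat);
coordinate i (1 <= i <= n) is X_i. Countable discrete alphabets are encoded in nat.\<close>

type_synonym outcome = "nat \<Rightarrow> nat"

text \<open>A CMI (C, <Q_1..Q_k>): conditioning set and a multiset of subsets.\<close>
type_synonym cmi = "nat set \<times> nat set multiset"

definition marg :: "outcome pmf \<Rightarrow> nat set \<Rightarrow> outcome pmf" where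
  "marg p A = map_pmf (\<lambda>x. restrict x A) p"

definition ent_term :: "outcome pmf \<Rightarrow> nat set \<Rightarrow> outcome \<Rightarrow> real" where
  "ent_term p A v = (let q = pmf (marg p A) v in if q = 0 then 0 else - q * ln q)"

definition ent :: "outcome pmf \<Rightarrow> nat set \<Rightarrow> real" where
  "ent p A = (\<Sum>\<^sub>\<infinity> v. ent_term p A v)"

definition admissible :: "nat \<Rightarrow> outcome pmf \<Rightarrow> bool" where
  "admissible n p \<longleftrightarrow> (\<forall>i\<in>{1..n}. ent_term p {i} summable_on UNIV)"

definition cmi_wf :: "nat \<Rightarrow> cmi \<Rightarrow> bool" where
  "cmi_wf n K \<longleftrightarrow> fst K \<subseteq> {1..n} \<and> (\<forall>Q\<in>#snd K. Q \<subseteq> {1..n})"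

definition cent :: "outcome pmf \<Rightarrow> nat set \<Rightarrow> nat set \<Rightarrow> real" where
  "cent p A C = ent p (A \<union> C) - ent p C"

definition cmi_valid :: "outcome pmf \<Rightarrow> cmi \<Rightarrow> bool" where
  "cmi_valid p K \<longleftrightarrow>
     (\<Sum>Q\<in>#snd K. cent p Q (fst K)) - cent p (\<Union>(set_mset (snd K))) (fst K) = 0"

definition cmi_degenerate :: "nat \<Rightarrow> cmi \<Rightarrow> bool" where
  "cmi_degenerate n K \<longleftrightarrow> (\<forall>p. admissible n p \<longrightarrow> cmi_valid p K)"

definition cmi_implies :: "nat \<Rightarrow> cmi \<Rightarrow> cmi \<Rightarrow> bool" where
  "cmi_implies n K K' \<longleftrightarrow> (\<forall>p. admissible n p \<longrightarrow> cmi_valid p K \<longrightarrow> cmi_valid p K')"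

definition pur :: "cmi \<Rightarrow> cmi" where
  "pur K = (fst K, image_mset (\<lambda>Q. Q - fst K) (filter_mset (\<lambda>Q. Q - fst K \<noteq> {}) (snd K)))"

definition II :: "cmi \<Rightarrow> nat set" where
  "II K = (if size (snd K) \<ge> 2
           then {i. size (filter_mset (\<lambda>Q. i \<in> Q) (snd K)) \<ge> 2} else {})"

definition Ps :: "cmi \<Rightarrow> nat set multiset" where
  "Ps K = filter_mset (\<lambda>P. P \<noteq> {}) (image_mset (\<lambda>Q. Q - II K) (snd K))"

text \<open>Canonical form; None represents the degenerate CMI (.,< >).\<close>
definition can :: "cmi \<Rightarrow> cmi option" where
  "can K = (if size (snd K) \<le> 1 then None
            else if II K \<noteq> {} \<and> size (Ps K) \<le> 1 then Some (fst K, {#II K, II K#})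
            else if II K = {} then Some (fst K, Ps K)
            else Some (fst K, {#II K, II K#} + Ps K))"

end

theory Submission
  imports Defs
begin

definition fz :: "nat set \<Rightarrow> bool \<Rightarrow> outcome" where
  "fz D b = (\<lambda>i. if i \<in> D then 0 else if b then 1 else 0)"

definition pz :: "nat set \<Rightarrow> outcome pmf" where
  "pz D = map_pmf (fz D) (pmf_of_set UNIV)"

lemma marg_pz: "marg (pz D) A = map_pmf (\<lambda>b. restrict (fz D b) A) (pmf_of_set UNIV)"
  unfolding marg_def pz_def by (simp add: pmf.map_comp o_def)

lemma fin_sum:
  fixes f :: "'a \<Rightarrow> real"
  assumes "finite S" "\<And>v. v \<notin> S \<Longrightarrow> f v = 0"
  shows "f summable_on UNIV" "infsum f UNIV = sum f S"
proof -
  show "f summable_on UNIV"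
    using summable_on_cong_neutral[of UNIV S f f] assms by auto
  have "infsum f UNIV = infsum f S"
    by (rule infsum_cong_neutral) (use assms in auto)
  then show "infsum f UNIV = sum f S" using assms by simp
qed

lemma ent_term_small:
  assumes "A \<subseteq> D"
  shows "ent_term (pz D) A v = 0"
proof -
  have "(\<lambda>b. restrict (fz D b) A) = (\<lambda>b. restrict (fz D True) A)"
    using assms by (auto simp: fz_def restrict_def fun_eq_iff)
  then have "marg (pz D) A = return_pmf (restrict (fz D True) A)"
    by (simp add: marg_pz map_pmf_const)
  then show ?thesis by (cases "v = restrict (fz D True) A") (simp_all add: ent_term_def Let_def pmf_return)
qed

lemma ent_small: "A \<subseteq> D \<Longrightarrow> ent (pz D) A = 0"
proof -
  assume "A \<subseteq> D"
  then have "ent_term (pz D) A = (\<lambda>_. 0)" using ent_term_small by (simp add: fun_eq_iff)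
  then show ?thesis unfolding ent_def by simp
qed

lemma ent_term_big:
  assumes "A - D \<noteq> {}"
  shows "ent_term (pz D) A v = (if v \<in> range (\<lambda>b. restrict (fz D b) A) then ln 2 / 2 else 0)"
proof -
  let ?g = "\<lambda>b. restrict (fz D b) A"
  obtain a where a: "a \<in> A" "a \<notin> D" using assms by auto
  have inj: "inj ?g"
  proof (rule injI)
    fix x y assume "?g x = ?g y"
    then have "?g x a = ?g y a" by simp
    then show "x = y" using a by (auto simp: fz_def restrict_def split: if_splits)
  qed
  show ?thesis
  proof (cases "v \<in> range ?g")
    case True
    then obtain b where v: "v = ?g b" by auto
    have q: "pmf (marg (pz D) A) v = 1/2"
      unfolding marg_pz v by (simp add: pmf_map_inj'[OF inj])
    show ?thesis using True unfolding ent_term_def Let_def q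
      by (simp add: ln_div)
  next
    case False
    have "pmf (marg (pz D) A) v = 0"
      unfolding marg_pz using False by (simp add: pmf_eq_0_set_pmf)
    then show ?thesis using False by (simp add: ent_term_def Let_def)
  qed
qed

lemma ent_big:
  assumes "A - D \<noteq> {}"
  shows "ent (pz D) A = ln 2" "ent_term (pz D) A summable_on UNIV"
proof -
  let ?S = "range (\<lambda>b. restrict (fz D b) A)"
  have fin: "finite ?S" by simp
  have z: "\<And>v. v \<notin> ?S \<Longrightarrow> ent_term (pz D) A v = 0" using ent_term_big[OF assms] by simp
  show "ent_term (pz D) A summable_on UNIV" using fin_sum(1)[OF fin z] .
  obtain a where a: "a \<in> A" "a \<notin> D" using assms by auto
  have inj: "inj (\<lambda>b. restrict (fz D b) A)"
  proof (rule injI)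
    fix x y assume "restrict (fz D x) A = restrict (fz D y) A"
    then have "restrict (fz D x) A a = restrict (fz D y) A a" by simp
    then show "x = y" using a by (auto simp: fz_def restrict_def split: if_splits)
  qed
  have c: "card ?S = 2" using card_image[OF inj] by simp
  have "ent (pz D) A = sum (ent_term (pz D) A) ?S"
    unfolding ent_def using fin_sum(2)[OF fin z] .
  also have "\<dots> = card ?S * (ln 2 / 2)"
    using ent_term_big[OF assms] by simp
  finally show "ent (pz D) A = ln 2" using c by simp
qed

lemma ent_pz: "ent (pz D) A = (if A - D = {} then 0 else ln 2)"
  using ent_small ent_big by auto

lemma adm_pz: "admissible n (pz D)"
  unfolding admissible_def
proof
  fix i assume "i \<in> {1..n}"
  show "ent_term (pz D) {i} summable_on UNIV"
  proof (cases "{i} - D = {}")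
    case True
    then have "ent_term (pz D) {i} = (\<lambda>_. 0)" using ent_term_small[of "{i}" D] by (auto simp: fun_eq_iff)
    then show ?thesis by simp
  next
    case False
    then show ?thesis using ent_big(2) by blast
  qed
qed

lemma sum_if_mset:
  "(\<Sum>Q\<in>#M. (if P Q then (c::real) else 0)) = real (size (filter_mset P M)) * c"
  by (induction M) (auto simp: algebra_simps)

theorem mainTheorem6:
  fixes n :: nat and K K' :: cmi and C C' :: "nat set" and M M' :: "nat set multiset"
  assumes "cmi_wf n K" and "cmi_wf n K'"
    and "\<not> cmi_degenerate n K" and "\<not> cmi_degenerate n K'"
    and "can (pur K) = Some (C, M)" and "can (pur K') = Some (C', M')"
    and "cmi_implies n K K'"
  shows "C \<subseteq> C'"
proof
  fix c assume cC: "c \<in> C"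
  show "c \<in> C'"
  proof (rule ccontr)
    assume cC': "c \<notin> C'"
    have C: "C = fst K" using assms(5) by (auto simp: can_def pur_def split: if_splits)
    have C': "C' = fst K'" using assms(6) by (auto simp: can_def pur_def split: if_splits)
    have sz: "size (filter_mset (\<lambda>Q. Q - C' \<noteq> {}) (snd K')) \<ge> 2"
      using assms(6) C' by (auto simp: can_def pur_def split: if_splits)
    let ?p = "pz C'"
    have vK: "cmi_valid ?p K"
    proof -
      have "\<And>Q. cent ?p Q (fst K) = 0"
        using cC cC' C by (auto simp: cent_def ent_pz Un_Diff)
      then show ?thesis by (simp add: cmi_valid_def)
    qed
    have ent0: "ent ?p C' = 0" by (simp add: ent_pz)
    let ?F = "filter_mset (\<lambda>Q. Q - C' \<noteq> {}) (snd K')"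
    have "(\<Sum>Q\<in>#snd K'. cent ?p Q C') = (\<Sum>Q\<in>#snd K'. (if Q - C' \<noteq> {} then ln 2 else 0))"
      by (rule arg_cong[where f=sum_mset], rule image_mset_cong)
         (simp add: cent_def ent_pz Un_Diff)
    also have "\<dots> = real (size ?F) * ln 2" by (rule sum_if_mset)
    finally have s: "(\<Sum>Q\<in>#snd K'. cent ?p Q C') = real (size ?F) * ln 2" .
    have "?F \<noteq> {#}"
    proof
      assume "?F = {#}"
      then have "size ?F = size ({#}::nat set multiset)" by (rule arg_cong)
      then have "size ?F = 0" by simp
      with sz show False by linarith
    qed
    then obtain Q where Q: "Q \<in># ?F" by blast
    then have "\<Union>(set_mset (snd K')) - C' \<noteq> {}" by auto
    then have u: "cent ?p (\<Union>(set_mset (snd K'))) C' = ln 2"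
      by (simp add: cent_def ent_pz Un_Diff)
    have "real (size ?F) * ln 2 - ln 2 \<noteq> 0"
    proof -
      have "real (size ?F) \<ge> 2" using sz by simp
      then have "real (size ?F) * ln 2 \<ge> 2 * ln 2" by (simp add: mult_right_mono)
      then show ?thesis by (smt (verit) ln_gt_zero)
    qed
    then have "\<not> cmi_valid ?p K'" using s u C' by (simp add: cmi_valid_def)
    then show False using assms(7) vK adm_pz unfolding cmi_implies_def by blast
  qed
qed

end
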